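(* Let $G$ be a group with a right-invariant metric $d$, and suppose there is a group $\tilde G\supseteq G$ (with $G$ a subgroup) carrying a right-invariant metric $\tilde d$ with $\tilde d|_G=d$, such that $(\tilde G,\tilde d)$ is voidless. Then for every closed ball $B\subset G$ and every $\sigma\in G$, $B\,\triangle\,\sigma B\subseteq\partial_tB$, where $t=d(\sigma,e)$.
   Context: Closed balls in $G$: $B_r(x)=\{y\in G:d(x,y)\le r\}$; $\tilde B_r(x)$, $\partial\tilde B_r(x)=\{y\in\tilde G:\tilde d(x,y)=r\}$ are the corresponding ball and sphere in $\tilde G$, and $\partial_tB_r(x)=\{y\in G:\tilde d(y,\partial\tilde B_r(x))\le t\}$. A metric space is voidless if for all $x$ and $r>0$, every closed ball meeting both $\{y:d(x,y)<r\}$ and $\{y:d(x,y)>r\}$ also meets $\{y:d(x,y)=r\}$. $\sigma B=\{\sigma g:g\in B\}$. *)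

theory Defs
  imports Complex_Main "HOL-Algebra.Group"
begin

definition metric_on :: "'a set \<Rightarrow> ('a \<Rightarrow> 'a \<Rightarrow> real) \<Rightarrow> bool" where
  "metric_on S d \<longleftrightarrow>
     (\<forall>x\<in>S. \<forall>y\<in>S. 0 \<le> d x y \<and> (d x y = 0 \<longleftrightarrow> x = y) \<and> d x y = d y x) \<and>
     (\<forall>x\<in>S. \<forall>y\<in>S. \<forall>z\<in>S. d x z \<le> d x y + d y z)"

definition right_invariant_metric :: "('a, 'b) monoid_scheme \<Rightarrow> ('a \<Rightarrow> 'a \<Rightarrow> real) \<Rightarrow> bool" where
  "right_invariant_metric G d \<longleftrightarrow> metric_on (carrier G) d \<and>
     (\<forall>x\<in>carrier G. \<forall>y\<in>carrier G. \<forall>g\<in>carrier G. d (x \<otimes>\<^bsub>G\<^esub> g) (y \<otimes>\<^bsub>G\<^esub> g) = d x y)"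

definition cball_in :: "'a set \<Rightarrow> ('a \<Rightarrow> 'a \<Rightarrow> real) \<Rightarrow> 'a \<Rightarrow> real \<Rightarrow> 'a set" where
  "cball_in S d x r = {y \<in> S. d x y \<le> r}"

definition sphere_in :: "'a set \<Rightarrow> ('a \<Rightarrow> 'a \<Rightarrow> real) \<Rightarrow> 'a \<Rightarrow> real \<Rightarrow> 'a set" where
  "sphere_in S d x r = {y \<in> S. d x y = r}"

definition voidless :: "'a set \<Rightarrow> ('a \<Rightarrow> 'a \<Rightarrow> real) \<Rightarrow> bool" where
  "voidless S d \<longleftrightarrow>
     (\<forall>x\<in>S. \<forall>r>0. \<forall>z\<in>S. \<forall>s.
        (cball_in S d z s \<inter> {y \<in> S. d x y < r} \<noteq> {}) \<and>
        (cball_in S d z s \<inter> {y \<in> S. d x y > r} \<noteq> {}) \<longrightarrow>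
        cball_in S d z s \<inter> {y \<in> S. d x y = r} \<noteq> {})"

text \<open>Distance from a point to a set (infimum); a point is within distance t of the
  empty set never (distance to the empty set is taken to be infinite).\<close>
definition within_setdist :: "('a \<Rightarrow> 'a \<Rightarrow> real) \<Rightarrow> 'a \<Rightarrow> 'a set \<Rightarrow> real \<Rightarrow> bool" where
  "within_setdist d y A t \<longleftrightarrow> A \<noteq> {} \<and> (INF a\<in>A. d y a) \<le> t"

definition boundary_nbhd ::
  "'a set \<Rightarrow> 'a set \<Rightarrow> ('a \<Rightarrow> 'a \<Rightarrow> real) \<Rightarrow> real \<Rightarrow> 'a \<Rightarrow> real \<Rightarrow> 'a set" where
  "boundary_nbhd H Ht dt t x r = {y \<in> H. within_setdist dt y (sphere_in Ht dt x r) t}"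

definition left_translate :: "('a, 'b) monoid_scheme \<Rightarrow> 'a \<Rightarrow> 'a set \<Rightarrow> 'a set" where
  "left_translate G \<sigma> B = (\<lambda>g. \<sigma> \<otimes>\<^bsub>G\<^esub> g) ` B"

end

theory Submission
  imports Defs
begin

lemma key:
  assumes ri: "right_invariant_metric Gt dt"
    and vl: "voidless (carrier Gt) dt"
    and xc: "x \<in> carrier Gt" and yc: "y \<in> carrier Gt"
    and pc: "p \<in> carrier Gt" and qc: "q \<in> carrier Gt"
    and yp: "dt y p \<le> t" and yq: "dt y q \<le> t"
    and xp: "dt x p \<le> r" and xq: "dt x q > r"
  shows "within_setdist dt y (sphere_in (carrier Gt) dt x r) t"
proof -
  have met: "metric_on (carrier Gt) dt" using ri by (simp add: right_invariant_metric_def)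
  have nn: "\<And>a b. a \<in> carrier Gt \<Longrightarrow> b \<in> carrier Gt \<Longrightarrow> 0 \<le> dt a b"
    using met by (simp add: metric_on_def)
  let ?S = "sphere_in (carrier Gt) dt x r"
  have bdd: "bdd_below ((\<lambda>a. dt y a) ` ?S)"
    by (rule bdd_belowI[where m=0]) (auto simp: sphere_in_def intro: nn[OF yc])
  obtain z where zS: "z \<in> ?S" and yz: "dt y z \<le> t"
  proof (cases "dt x p = r")
    case True
    then show ?thesis using that[of p] pc yp by (auto simp: sphere_in_def)
  next
    case False
    hence lt: "dt x p < r" using xp by simp
    hence rpos: "r > 0" using nn[OF xc pc] by simp
    have "cball_in (carrier Gt) dt y t \<inter> {w \<in> carrier Gt. dt x w < r} \<noteq> {}"
      using pc yp lt by (auto simp: cball_in_def)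
    moreover have "cball_in (carrier Gt) dt y t \<inter> {w \<in> carrier Gt. dt x w > r} \<noteq> {}"
      using qc yq xq by (auto simp: cball_in_def)
    ultimately have "cball_in (carrier Gt) dt y t \<inter> {w \<in> carrier Gt. dt x w = r} \<noteq> {}"
      using vl xc yc rpos unfolding voidless_def by blast
    then show ?thesis using that by (auto simp: cball_in_def sphere_in_def)
  qed
  have "(INF a\<in>?S. dt y a) \<le> dt y z" by (rule cINF_lower[OF bdd zS])
  with yz zS show ?thesis by (auto simp: within_setdist_def)
qed

theorem lemma4:
  fixes Gt :: "('a, 'b) monoid_scheme" and H :: "'a set"
    and d dt :: "'a \<Rightarrow> 'a \<Rightarrow> real"
  assumes "group Gt"
    and "subgroup H Gt"
    and "metric_on H d"
    and "\<forall>x\<in>H. \<forall>y\<in>H. \<forall>g\<in>H. d (x \<otimes>\<^bsub>Gt\<^esub> g) (y \<otimes>\<^bsub>Gt\<^esub> g) = d x y"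
    and "right_invariant_metric Gt dt"
    and "\<forall>x\<in>H. \<forall>y\<in>H. dt x y = d x y"
    and "voidless (carrier Gt) dt"
    and "x \<in> H" and "\<sigma> \<in> H"
  shows "let B = cball_in H d x r in
         (B - left_translate Gt \<sigma> B) \<union> (left_translate Gt \<sigma> B - B)
           \<subseteq> boundary_nbhd H (carrier Gt) dt (d \<sigma> \<one>\<^bsub>Gt\<^esub>) x r"
proof -
  interpret G: group Gt by fact
  interpret S: subgroup H Gt by fact
  have ri: "\<And>a b g. a \<in> carrier Gt \<Longrightarrow> b \<in> carrier Gt \<Longrightarrow> g \<in> carrier Gt \<Longrightarrow>
      dt (a \<otimes>\<^bsub>Gt\<^esub> g) (b \<otimes>\<^bsub>Gt\<^esub> g) = dt a b"
    using assms(5) by (simp add: right_invariant_metric_def)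
  have Hc: "\<And>a. a \<in> H \<Longrightarrow> a \<in> carrier Gt" using S.subset by blast
  have sc: "\<sigma> \<in> carrier Gt" using Hc assms(9) .
  have xc: "x \<in> carrier Gt" using Hc assms(8) .
  define t where "t = d \<sigma> \<one>\<^bsub>Gt\<^esub>"
  have tdt: "t = dt \<sigma> \<one>\<^bsub>Gt\<^esub>" using assms(6) assms(9) S.one_closed by (simp add: t_def)
  have e1: "dt \<one>\<^bsub>Gt\<^esub> (inv\<^bsub>Gt\<^esub> \<sigma>) = t"
    using ri[of "\<one>\<^bsub>Gt\<^esub>" "inv\<^bsub>Gt\<^esub> \<sigma>" \<sigma>] sc tdt by simp
  have d1: "\<And>y. y \<in> carrier Gt \<Longrightarrow> dt y (inv\<^bsub>Gt\<^esub> \<sigma> \<otimes>\<^bsub>Gt\<^esub> y) = t"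
  proof -
    fix y assume yc: "y \<in> carrier Gt"
    have "dt (y \<otimes>\<^bsub>Gt\<^esub> inv\<^bsub>Gt\<^esub> y) (inv\<^bsub>Gt\<^esub> \<sigma> \<otimes>\<^bsub>Gt\<^esub> y \<otimes>\<^bsub>Gt\<^esub> inv\<^bsub>Gt\<^esub> y)
        = dt y (inv\<^bsub>Gt\<^esub> \<sigma> \<otimes>\<^bsub>Gt\<^esub> y)"
      using ri[of y "inv\<^bsub>Gt\<^esub> \<sigma> \<otimes>\<^bsub>Gt\<^esub> y" "inv\<^bsub>Gt\<^esub> y"] yc sc by simp
    moreover have "inv\<^bsub>Gt\<^esub> \<sigma> \<otimes>\<^bsub>Gt\<^esub> y \<otimes>\<^bsub>Gt\<^esub> inv\<^bsub>Gt\<^esub> y = inv\<^bsub>Gt\<^esub> \<sigma>"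
      using yc sc by (simp add: G.m_assoc)
    ultimately show "dt y (inv\<^bsub>Gt\<^esub> \<sigma> \<otimes>\<^bsub>Gt\<^esub> y) = t" using e1 yc by simp
  qed
  have d2: "\<And>g. g \<in> carrier Gt \<Longrightarrow> dt (\<sigma> \<otimes>\<^bsub>Gt\<^esub> g) g = t"
    using ri[of \<sigma> "\<one>\<^bsub>Gt\<^esub>"] sc tdt by (metis G.l_one G.one_closed)
  have tnn: "0 \<le> t" using assms(3) assms(9) S.one_closed unfolding metric_on_def t_def by blast
  have dd: "\<And>a. a \<in> H \<Longrightarrow> dt x a = d x a" using assms(6) assms(8) by blast
  show ?thesis
  proof (simp only: Let_def, rule subsetI)
    fix y
    assume "y \<in> (cball_in H d x r - left_translate Gt \<sigma> (cball_in H d x r)) \<union>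
               (left_translate Gt \<sigma> (cball_in H d x r) - cball_in H d x r)"
    then consider (a) "y \<in> H" "d x y \<le> r" "y \<notin> left_translate Gt \<sigma> (cball_in H d x r)"
      | (b) g where "g \<in> H" "d x g \<le> r" "y = \<sigma> \<otimes>\<^bsub>Gt\<^esub> g" "\<not> (y \<in> H \<and> d x y \<le> r)"
      by (auto simp: cball_in_def left_translate_def)
    then show "y \<in> boundary_nbhd H (carrier Gt) dt (d \<sigma> \<one>\<^bsub>Gt\<^esub>) x r"
    proof cases
      case a
      let ?q = "inv\<^bsub>Gt\<^esub> \<sigma> \<otimes>\<^bsub>Gt\<^esub> y"
      have qH: "?q \<in> H" using a(1) assms(9) by simp
      have "\<sigma> \<otimes>\<^bsub>Gt\<^esub> ?q = y" using a(1) sc Hc by (simp add: G.m_assoc[symmetric])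
      hence "\<not> d x ?q \<le> r" using a(3) qH unfolding left_translate_def cball_in_def
        by (metis (mono_tags, lifting) image_eqI mem_Collect_eq)
      hence "dt x ?q > r" using dd qH by simp
      moreover have "dt y y \<le> t" using tnn assms(5) Hc[OF a(1)]
        unfolding right_invariant_metric_def metric_on_def by fastforce
      ultimately have "within_setdist dt y (sphere_in (carrier Gt) dt x r) t"
        using key[OF assms(5) assms(7) xc Hc[OF a(1)] Hc[OF a(1)] Hc[OF qH]] d1[OF Hc[OF a(1)]]
          dd[OF a(1)] a(2) by simp
      then show ?thesis using a(1) by (simp add: boundary_nbhd_def t_def)
    next
      case b
      have yH: "y \<in> H" using b(1,3) assms(9) by simp
      hence "dt x y > r" using b(4) dd by simp
      moreover have "dt y y \<le> t" using tnn assms(5) Hc[OF yH]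
        unfolding right_invariant_metric_def metric_on_def by fastforce
      ultimately have "within_setdist dt y (sphere_in (carrier Gt) dt x r) t"
        using key[OF assms(5) assms(7) xc Hc[OF yH] Hc[OF b(1)] Hc[OF yH]] d2[OF Hc[OF b(1)]]
          dd[OF b(1)] b(2,3) by simp
      then show ?thesis using yH by (simp add: boundary_nbhd_def t_def)
    qed
  qed
qed

end
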